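(* Fix $\epsilon>0$ and suppose that, along a run of the RD-Tracking-TMCTS sampling rule, there exists a positive integer $t_0$ such that $|w^{s_0}_\ell(\hat{\bm{\mu}}(t))-w^{s_0}_\ell(\bm{\mu})|\le\epsilon$ for all $t\ge t_0$ and all $\ell\in\mathcal{L}(\mathcal{T})$. Then there exists a positive integer $t_1\ge t_0$ such that \[\max_{\ell\in\mathcal{L}(\mathcal{T})}\Big|\frac{N_\ell(t)}{t}-w^{s_0}_\ell(\bm{\mu})\Big|\le2(|\mathcal{L}(\mathcal{T})|-1)\epsilon\quad\text{for all }t\ge t_1.\]
   Context: $\mathcal{T}$: finite rooted tree with root $s_0$, children $\mathcal{C}(s)$, leaves $\mathcal{L}(\mathcal{T})$, $\mathcal{D}(s)$ leaves descending from $s$; internal labels $L(s)\in\{\text{MAX},\text{MIN}\}$. $X\subseteq\mathbb{R}$ mean-parameter set of a one-parameter exponential family, $d(x,y)$ KL divergence, threshold $\theta\in X$. $V_s(\bm{\lambda})=\lambda_s$ at leaves, max/min of children's values at MAX/MIN nodes; $a_s=$'win' iff $V_s\ge\theta$. For any mean vector $\bm{\nu}$ the recursive weights are: $a^*=a_{s_0}(\bm{\nu})$; $P=$MAX, $Q=$MIN if $a^*=$'win', swapped if 'lose'. Leaf $s$: $w^s_s=1$, $d_s=d(\nu_s,\theta)$ if ($a^*=$'win', $\nu_s\ge\theta$) or ($a^*=$'lose', $\nu_s<\theta$), else $0$. $L(s)=P$: $d_s=\max_c d_c$, $c^*(s)\in\arg\max_c d_c$, if $d_s>0$: $w^s=w^{c^*(s)}$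 on $\mathcal{D}(c^*(s))$, $0$ elsewhere. $L(s)=Q$, all $d_c>0$: $d_s=(\sum_c1/d_c)^{-1}$, $w^s_\ell=\frac{w^c_\ell/d_c}{\sum_{c'}1/d_{c'}}$ on $\mathcal{D}(c)$. $L(s)=Q$ otherwise: $d_s=0$. Internal $s$ with $d_s=0$: $\bm{w}^s$ arbitrary probability vector. $\bm{\mu}$ is the true mean vector (so $\bm{w}^{s_0}(\bm{\mu})$ is a fixed probability vector). $N_\ell(t)$ is the number of draws of leaf $\ell$ in rounds $1..t$ and $\hat{\bm{\mu}}(t)$ the vector of empirical means. RD-Tracking-TMCTS sampling rule: draw each leaf once; then at round $t$, if some leaf has $N_\ell(t-1)<\sqrt t-|\mathcal{L}(\mathcal{T})|/2$ select $I(t)\in\arg\min_\ell N_\ell(t-1)$, else $I(t)\in\arg\max_\ell w^{s_0}_\ell(\hat{\bm{\mu}}(t-1))/N_\ell(t-1)$. *)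

theory Defs
  imports Complex_Main
begin

datatype label = LMax | LMin

datatype 'a gtree = Leaf 'a | Node label "'a gtree list"

fun leaves :: "'a gtree \<Rightarrow> 'a list" where
  "leaves (Leaf x) = [x]"
| "leaves (Node lab cs) = concat (map leaves cs)"

text \<open>Well-formedness: every internal node has at least one child.
  (Distinctness of leaf identifiers is required separately.)\<close>
fun wf_gtree :: "'a gtree \<Rightarrow> bool" where
  "wf_gtree (Leaf x) = True"
| "wf_gtree (Node lab cs) = (cs \<noteq> [] \<and> (\<forall>c\<in>set cs. wf_gtree c))"

fun tval :: "('a \<Rightarrow> real) \<Rightarrow> 'a gtree \<Rightarrow> real" where
  "tval \<nu> (Leaf x) = \<nu> x"
| "tval \<nu> (Node LMax cs) = Max (set (map (tval \<nu>) cs))"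
| "tval \<nu> (Node LMin cs) = Min (set (map (tval \<nu>) cs))"

text \<open>The quantities d_s.  win = (a* = 'win'); a node with label lab has label P
  iff (lab = LMax) = win.\<close>
fun dval :: "bool \<Rightarrow> (real \<Rightarrow> real \<Rightarrow> real) \<Rightarrow> real \<Rightarrow> ('a \<Rightarrow> real) \<Rightarrow> 'a gtree \<Rightarrow> real" where
  "dval win d \<theta> \<nu> (Leaf x) =
     (if (win \<and> \<nu> x \<ge> \<theta>) \<or> (\<not> win \<and> \<nu> x < \<theta>) then d (\<nu> x) \<theta> else 0)"
| "dval win d \<theta> \<nu> (Node lab cs) =
     (if (lab = LMax) = win then Max (set (map (dval win d \<theta> \<nu>) cs))
      else if (\<forall>c\<in>set cs. dval win d \<theta> \<nu> c > 0)
           then 1 / (\<Sum>c\<leftarrow>cs. 1 / dval win d \<theta> \<nu> c)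
      else 0)"

text \<open>The (non-deterministic, because of ties and of the arbitrary choice when d_s = 0)
  recursive weights: is_w win d theta nu s w means that w is an admissible choice of
  the vector w^s, extended by 0 outside D(s).\<close>
inductive is_w :: "bool \<Rightarrow> (real \<Rightarrow> real \<Rightarrow> real) \<Rightarrow> real \<Rightarrow> ('a \<Rightarrow> real)
                    \<Rightarrow> 'a gtree \<Rightarrow> ('a \<Rightarrow> real) \<Rightarrow> bool"
  for win d \<theta> \<nu> where
  leaf: "is_w win d \<theta> \<nu> (Leaf x) (\<lambda>l. if l = x then 1 else 0)"
| pnode: "\<lbrakk> (lab = LMax) = win; dval win d \<theta> \<nu> (Node lab cs) > 0; c \<in> set cs;
           dval win d \<theta> \<nu> c = dval win d \<theta> \<nu> (Node lab cs); is_w win d \<theta> \<nu> c w \<rbrakk>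
          \<Longrightarrow> is_w win d \<theta> \<nu> (Node lab cs) w"
| qnode: "\<lbrakk> (lab = LMax) \<noteq> win; \<forall>c\<in>set cs. dval win d \<theta> \<nu> c > 0;
           \<forall>i<length cs. is_w win d \<theta> \<nu> (cs ! i) (ws i) \<rbrakk>
          \<Longrightarrow> is_w win d \<theta> \<nu> (Node lab cs)
                (\<lambda>l. (\<Sum>i<length cs. ws i l / dval win d \<theta> \<nu> (cs ! i))
                     / (\<Sum>i<length cs. 1 / dval win d \<theta> \<nu> (cs ! i)))"
| zero: "\<lbrakk> dval win d \<theta> \<nu> (Node lab cs) = 0; \<forall>l. w l \<ge> 0;
           \<forall>l. l \<notin> set (leaves (Node lab cs)) \<longrightarrow> w l = 0;
           (\<Sum>l\<in>set (leaves (Node lab cs)). w l) = 1 \<rbrakk>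
          \<Longrightarrow> is_w win d \<theta> \<nu> (Node lab cs) w"

text \<open>w is an admissible choice of w^{s_0}(nu) for the root T, with a* = a_{s_0}(nu).\<close>
definition root_weights :: "'a gtree \<Rightarrow> (real \<Rightarrow> real \<Rightarrow> real) \<Rightarrow> real \<Rightarrow> ('a \<Rightarrow> real)
                             \<Rightarrow> ('a \<Rightarrow> real) \<Rightarrow> bool" where
  "root_weights T d \<theta> \<nu> w = is_w (tval \<nu> T \<ge> \<theta>) d \<theta> \<nu> T w"

text \<open>I t is the leaf drawn at round t (t = 1, 2, ...), Y t the observation at round t.\<close>
definition Ncount :: "(nat \<Rightarrow> 'a) \<Rightarrow> 'a \<Rightarrow> nat \<Rightarrow> nat" where
  "Ncount I l t = card {s \<in> {1..t}. I s = l}"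

definition muhat :: "(nat \<Rightarrow> 'a) \<Rightarrow> (nat \<Rightarrow> real) \<Rightarrow> nat \<Rightarrow> 'a \<Rightarrow> real" where
  "muhat I Y t l = (\<Sum>s\<in>{s \<in> {1..t}. I s = l}. Y s) / real (Ncount I l t)"

text \<open>W t is the weight vector w^{s_0}(muhat(t)) chosen along the run (for t >= |L|,
  when all empirical means are defined).\<close>
definition rd_tracking_run :: "'a gtree \<Rightarrow> (real \<Rightarrow> real \<Rightarrow> real) \<Rightarrow> real
      \<Rightarrow> (nat \<Rightarrow> 'a) \<Rightarrow> (nat \<Rightarrow> real) \<Rightarrow> (nat \<Rightarrow> 'a \<Rightarrow> real) \<Rightarrow> bool" where
  "rd_tracking_run T d \<theta> I Y W \<longleftrightarrow>
     (let L = set (leaves T); K = card L in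
       (\<forall>t\<ge>1. I t \<in> L) \<and>
       I ` {1..K} = L \<and>
       (\<forall>t\<ge>K. root_weights T d \<theta> (muhat I Y t) (W t)) \<and>
       (\<forall>t>K.
          if (\<exists>l\<in>L. real (Ncount I l (t - 1)) < sqrt (real t) - real K / 2)
          then (\<forall>l\<in>L. Ncount I (I t) (t - 1) \<le> Ncount I l (t - 1))
          else (\<forall>l\<in>L. W (t - 1) l / real (Ncount I l (t - 1))
                       \<le> W (t - 1) (I t) / real (Ncount I (I t) (t - 1)))))"

end

theory Submission
  imports Defs
begin


lemma is_w_props:
  assumes "is_w win d \<theta> \<nu> T w" and "wf_gtree T"
  shows "(\<forall>l. w l \<ge> 0) \<and> (\<forall>l. l \<notin> set (leaves T) \<longrightarrow> w l = 0)
         \<and> (\<Sum>l\<in>set (leaves T). w l) = 1"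
  using assms
proof (induction rule: is_w.induct)
  case (leaf x)
  then show ?case by simp
next
  case (pnode lab cs c w)
  have sub: "set (leaves c) \<subseteq> set (leaves (Node lab cs))" using pnode.hyps(3) by auto
  have wfc: "wf_gtree c" using pnode.prems pnode.hyps(3) by auto
  have IH: "(\<forall>l. w l \<ge> 0) \<and> (\<forall>l. l \<notin> set (leaves c) \<longrightarrow> w l = 0)
         \<and> (\<Sum>l\<in>set (leaves c). w l) = 1" using pnode.IH wfc by blast
  have "(\<Sum>l\<in>set (leaves (Node lab cs)). w l) = (\<Sum>l\<in>set (leaves c). w l)"
    using IH sub by (intro sum.mono_neutral_right) auto
  then show ?case using IH sub by auto
next
  case (qnode lab cs ws)
  define D where "D i = dval win d \<theta> \<nu> (cs ! i)" for i
  define Z where "Z = (\<Sum>i<length cs. 1 / D i)"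
  have Dpos: "D i > 0" if "i < length cs" for i
    using qnode.hyps(2) that unfolding D_def by auto
  have ne: "cs \<noteq> []" using qnode.prems by simp
  have Zpos: "Z > 0" unfolding Z_def
    using ne Dpos by (intro sum_pos) auto
  have IH: "(\<forall>l. ws i l \<ge> 0) \<and> (\<forall>l. l \<notin> set (leaves (cs ! i)) \<longrightarrow> ws i l = 0)
         \<and> (\<Sum>l\<in>set (leaves (cs ! i)). ws i l) = 1" if "i < length cs" for i
    using qnode.IH qnode.prems that by auto
  have sub: "set (leaves (cs ! i)) \<subseteq> set (leaves (Node lab cs))" if "i < length cs" for i
    using that by (auto intro!: nth_mem)
  have s1: "(\<Sum>l\<in>set (leaves (Node lab cs)). ws i l) = 1" if "i < length cs" for i
  proof -
    have "(\<Sum>l\<in>set (leaves (Node lab cs)). ws i l) = (\<Sum>l\<in>set (leaves (cs ! i)). ws i l)"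
      using IH[OF that] sub[OF that] by (intro sum.mono_neutral_right) auto
    then show ?thesis using IH[OF that] by simp
  qed
  have nn: "\<forall>l. (\<Sum>i<length cs. ws i l / D i) / Z \<ge> 0"
  proof
    fix l
    have "(\<Sum>i<length cs. ws i l / D i) \<ge> 0"
    proof (rule sum_nonneg)
      fix i assume "i \<in> {..<length cs}"
      then have "ws i l \<ge> 0" "D i > 0" using IH Dpos by auto
      then show "ws i l / D i \<ge> 0" by simp
    qed
    then show "(\<Sum>i<length cs. ws i l / D i) / Z \<ge> 0" using Zpos by simp
  qed
  have supp: "\<forall>l. l \<notin> set (leaves (Node lab cs)) \<longrightarrow> (\<Sum>i<length cs. ws i l / D i) / Z = 0"
  proof (intro allI impI)
    fix l assume "l \<notin> set (leaves (Node lab cs))"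
    then have "\<forall>i<length cs. ws i l = 0" using IH sub by blast
    then show "(\<Sum>i<length cs. ws i l / D i) / Z = 0" by simp
  qed
  have sD: "(\<Sum>i<length cs. (\<Sum>l\<in>set (leaves (Node lab cs)). ws i l) / D i) = Z"
    unfolding Z_def by (rule sum.cong) (simp_all add: s1 del: leaves.simps)
  have "(\<Sum>l\<in>set (leaves (Node lab cs)). (\<Sum>i<length cs. ws i l / D i) / Z)
        = (\<Sum>l\<in>set (leaves (Node lab cs)). (\<Sum>i<length cs. ws i l / D i)) / Z"
    by (simp add: sum_divide_distrib)
  also have "\<dots> = (\<Sum>i<length cs. (\<Sum>l\<in>set (leaves (Node lab cs)). ws i l / D i)) / Z"
    by (subst sum.swap) (rule refl)
  also have "\<dots> = (\<Sum>i<length cs. (\<Sum>l\<in>set (leaves (Node lab cs)). ws i l) / D i) / Z"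
    by (simp add: sum_divide_distrib)
  also have "\<dots> = Z / Z" by (simp only: sD)
  also have "\<dots> = 1" using Zpos by simp
  finally have "(\<Sum>l\<in>set (leaves (Node lab cs)). (\<Sum>i<length cs. ws i l / D i) / Z) = 1" .
  then show ?case using nn supp unfolding D_def Z_def by simp
next
  case (zero lab cs w)
  then show ?case by simp
qed

lemma Ncount_Suc:
  "Ncount I l (Suc t) = Ncount I l t + (if I (Suc t) = l then 1 else 0)"
proof -
  have "{s \<in> {1..Suc t}. I s = l} = (if I (Suc t) = l then insert (Suc t) {s \<in> {1..t}. I s = l}
          else {s \<in> {1..t}. I s = l})" by (auto simp: le_Suc_eq)
  then show ?thesis unfolding Ncount_def by simp
qed

lemma Ncount_le: "Ncount I l t \<le> t"
proof -
  have "Ncount I l t \<le> card {1..t}" unfolding Ncount_def by (rule card_mono) auto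
  then show ?thesis by simp
qed

lemma Ncount_0: "Ncount I l 0 = 0"
  unfolding Ncount_def by simp

lemma Ncount_sum:
  assumes "finite L" and "\<forall>s. 1 \<le> s \<longrightarrow> I s \<in> L"
  shows "(\<Sum>l\<in>L. Ncount I l t) = t"
proof (induction t)
  case 0
  then show ?case by (simp add: Ncount_0)
next
  case (Suc t)
  have "I (Suc t) \<in> L" using assms by simp
  then show ?case using Suc assms by (simp add: Ncount_Suc sum.distrib)
qed

lemma Ncount_pos:
  assumes "s \<in> {1..K}" "I s = l" "K \<le> t"
  shows "Ncount I l t > 0"
proof -
  have "s \<in> {s \<in> {1..t}. I s = l}" using assms by auto
  moreover have "finite {s \<in> {1..t}. I s = l}" by simp
  ultimately have "{s \<in> {1..t}. I s = l} \<noteq> {}" "finite {s \<in> {1..t}. I s = l}" by auto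
  then show ?thesis unfolding Ncount_def by (simp add: card_gt_0_iff)
qed


theorem lemma8:
  fixes T :: "'a gtree" and d :: "real \<Rightarrow> real \<Rightarrow> real" and \<theta> :: real
    and \<mu> w0 :: "'a \<Rightarrow> real" and I :: "nat \<Rightarrow> 'a" and Y :: "nat \<Rightarrow> real"
    and W :: "nat \<Rightarrow> 'a \<Rightarrow> real" and \<epsilon> :: real and t0 :: nat
  assumes "wf_gtree T" and "distinct (leaves T)"
    and "\<forall>x y. d x y \<ge> 0" and "\<forall>x y. d x y = 0 \<longleftrightarrow> x = y"
    and "\<epsilon> > 0"
    and "rd_tracking_run T d \<theta> I Y W"
    and "root_weights T d \<theta> \<mu> w0"
    and "t0 \<ge> 1"
    and "\<forall>t\<ge>t0. \<forall>l\<in>set (leaves T). \<bar>W t l - w0 l\<bar> \<le> \<epsilon>"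
  shows "\<exists>t1\<ge>t0. \<forall>t\<ge>t1.
           (MAX l\<in>set (leaves T). \<bar>real (Ncount I l t) / real t - w0 l\<bar>)
             \<le> 2 * (real (card (set (leaves T))) - 1) * \<epsilon>"
proof -
  define L where "L = set (leaves T)"
  define K where "K = card L"
  have finL: "finite L" unfolding L_def by simp
  have run1: "\<forall>t\<ge>1. I t \<in> L" and run2: "I ` {1..K} = L"
    and run3: "\<forall>t\<ge>K. root_weights T d \<theta> (muhat I Y t) (W t)"
    and run4: "\<forall>t>K. if (\<exists>l\<in>L. real (Ncount I l (t - 1)) < sqrt (real t) - real K / 2)
          then (\<forall>l\<in>L. Ncount I (I t) (t - 1) \<le> Ncount I l (t - 1))
          else (\<forall>l\<in>L. W (t - 1) l / real (Ncount I l (t - 1))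
                       \<le> W (t - 1) (I t) / real (Ncount I (I t) (t - 1)))"
  proof -
    have R: "(\<forall>t\<ge>1. I t \<in> L) \<and> I ` {1..K} = L
      \<and> (\<forall>t\<ge>K. root_weights T d \<theta> (muhat I Y t) (W t))
      \<and> (\<forall>t>K. if (\<exists>l\<in>L. real (Ncount I l (t - 1)) < sqrt (real t) - real K / 2)
          then (\<forall>l\<in>L. Ncount I (I t) (t - 1) \<le> Ncount I l (t - 1))
          else (\<forall>l\<in>L. W (t - 1) l / real (Ncount I l (t - 1))
                       \<le> W (t - 1) (I t) / real (Ncount I (I t) (t - 1))))"
      using assms(6) unfolding rd_tracking_run_def Let_def L_def K_def .
    then show "\<forall>t\<ge>1. I t \<in> L" "I ` {1..K} = L"
      "\<forall>t\<ge>K. root_weights T d \<theta> (muhat I Y t) (W t)"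
      "\<forall>t>K. if (\<exists>l\<in>L. real (Ncount I l (t - 1)) < sqrt (real t) - real K / 2)
          then (\<forall>l\<in>L. Ncount I (I t) (t - 1) \<le> Ncount I l (t - 1))
          else (\<forall>l\<in>L. W (t - 1) l / real (Ncount I l (t - 1))
                       \<le> W (t - 1) (I t) / real (Ncount I (I t) (t - 1)))"
      by blast+
  qed
  have Lne: "L \<noteq> {}" using run1 by auto
  have K1: "K \<ge> 1" using finL Lne unfolding K_def by (simp add: Suc_le_eq card_gt_0_iff)
  have Wprops: "(\<forall>l. W t l \<ge> 0) \<and> (\<Sum>l\<in>L. W t l) = 1" if "t \<ge> K" for t
    using is_w_props[OF run3[rule_format, OF that, unfolded root_weights_def] assms(1)]
    unfolding L_def by blast
  have w0props: "(\<forall>l. w0 l \<ge> 0) \<and> (\<Sum>l\<in>L. w0 l) = 1"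
    using is_w_props[OF assms(7)[unfolded root_weights_def] assms(1)] unfolding L_def by blast
  have Npos: "Ncount I l t > 0" if "l \<in> L" "t \<ge> K" for l t
  proof -
    from that(1) run2 have "l \<in> I ` {1..K}" by simp
    then obtain s where "s \<in> {1..K}" "l = I s" by blast
    then show ?thesis using Ncount_pos[of s K I l t] that(2) by simp
  qed
  have Nsum: "(\<Sum>l\<in>L. real (Ncount I l t)) = real t" for t
  proof -
    have "(\<Sum>l\<in>L. Ncount I l t) = t" using Ncount_sum[OF finL run1] .
    then have "real (\<Sum>l\<in>L. Ncount I l t) = real t" by simp
    then show ?thesis by (simp only: of_nat_sum)
  qed
  define M where "M = max t0 K"
  have pull: "real (Ncount I (I (Suc n)) n) \<le> real n * (w0 (I (Suc n)) + \<epsilon>) + sqrt (real (Suc n))"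
    if n: "n \<ge> M" for n
  proof -
    define l where "l = I (Suc n)"
    have nK: "n \<ge> K" "n \<ge> t0" using n M_def by auto
    have lL: "l \<in> L" using run1 l_def by simp
    have h: "if (\<exists>j\<in>L. real (Ncount I j n) < sqrt (real (Suc n)) - real K / 2)
          then (\<forall>j\<in>L. Ncount I l n \<le> Ncount I j n)
          else (\<forall>j\<in>L. W n j / real (Ncount I j n) \<le> W n l / real (Ncount I l n))"
    proof -
      have "Suc n > K" using nK by simp
      from run4[rule_format, OF this] show ?thesis unfolding l_def diff_Suc_1 by simp
    qed
    have a0: "real n * (w0 l + \<epsilon>) \<ge> 0" using w0props assms(5)
      by (simp add: add_nonneg_nonneg less_imp_le)
    have "real (Ncount I l n) \<le> real n * (w0 l + \<epsilon>) + sqrt (real (Suc n))"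
    proof (cases "\<exists>j\<in>L. real (Ncount I j n) < sqrt (real (Suc n)) - real K / 2")
      case True
      then obtain j where j: "j \<in> L" "real (Ncount I j n) < sqrt (real (Suc n)) - real K / 2"
        by blast
      have "Ncount I l n \<le> Ncount I j n" using h True j by simp
      then have "real (Ncount I l n) \<le> real (Ncount I j n)" by simp
      then show ?thesis using j a0 by linarith
    next
      case False
      then have h2: "\<forall>j\<in>L. W n j / real (Ncount I j n) \<le> W n l / real (Ncount I l n)"
        using h by simp
      have npos: "real n > 0" using nK K1 by simp
      have Nl: "real (Ncount I l n) > 0" using Npos lL nK by simp
      have ge: "W n l / real (Ncount I l n) \<ge> 1 / real n"
      proof (rule ccontr)
        assume "\<not> ?thesis"
        then have lt0: "W n l / real (Ncount I l n) < 1 / real n" by simp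
        have lt: "W n j < real (Ncount I j n) / real n" if "j \<in> L" for j
        proof -
          have Nj: "real (Ncount I j n) > 0" using Npos that nK by simp
          have "W n j / real (Ncount I j n) \<le> W n l / real (Ncount I l n)" using h2 that by blast
          then have "W n j / real (Ncount I j n) < 1 / real n" using lt0 by linarith
          then have "W n j < 1 / real n * real (Ncount I j n)" 
            by (simp only: pos_divide_less_eq[OF Nj])
          then show ?thesis by simp
        qed
        have "(\<Sum>j\<in>L. W n j) < (\<Sum>j\<in>L. real (Ncount I j n) / real n)"
          by (rule sum_strict_mono[OF finL Lne lt])
        also have "\<dots> = 1" using Nsum[of n] npos by (simp add: sum_divide_distrib[symmetric])
        finally show False using Wprops nK by simp
      qed
      have "1 / real n * real (Ncount I l n) \<le> W n l" using ge Nl by (simp only: pos_le_divide_eq)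
      then have "real (Ncount I l n) / real n \<le> W n l" by simp
      then have "real (Ncount I l n) \<le> W n l * real n" using npos by (simp only: pos_divide_le_eq)
      then have "real (Ncount I l n) \<le> real n * W n l" by (simp only: mult.commute)
      moreover have "\<bar>W n l - w0 l\<bar> \<le> \<epsilon>" using assms(9) nK lL unfolding L_def by blast
      then have w: "W n l \<le> w0 l + \<epsilon>" by (simp add: abs_le_iff)
      then have "real n * W n l \<le> real n * (w0 l + \<epsilon>)" using npos by (simp add: mult_left_mono)
      moreover have "sqrt (real (Suc n)) \<ge> 0" by simp
      ultimately show ?thesis by linarith
    qed
    then show ?thesis unfolding l_def .
  qed
  have bound: "real (Ncount I l t) \<le> real (Ncount I l M) + 1 + real t * (w0 l + \<epsilon>) + sqrt (real t)"
    if l: "l \<in> L" and t: "M \<le> t" for l t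
  proof -
    have a0: "w0 l + \<epsilon> \<ge> 0" using w0props assms(5) by (simp add: add_nonneg_nonneg less_imp_le)
    show ?thesis using t
    proof (induction t rule: dec_induct)
      case base
      show ?case using a0 by simp
    next
      case (step n)
      show ?case
      proof (cases "I (Suc n) = l")
        case True
        have "real (Ncount I l (Suc n)) = real (Ncount I l n) + 1" using True by (simp add: Ncount_Suc)
        also have "\<dots> \<le> real n * (w0 l + \<epsilon>) + sqrt (real (Suc n)) + 1"
          using pull[OF step.hyps(1)] True by simp
        also have "\<dots> \<le> real (Ncount I l M) + 1 + real (Suc n) * (w0 l + \<epsilon>) + sqrt (real (Suc n))"
          using a0 by (simp add: algebra_simps)
        finally show ?thesis .
      next
        case False
        have "real (Ncount I l (Suc n)) = real (Ncount I l n)" using False by (simp add: Ncount_Suc)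
        also have "\<dots> \<le> real (Ncount I l M) + 1 + real n * (w0 l + \<epsilon>) + sqrt (real n)"
          by (rule step.IH)
        also have "\<dots> \<le> real (Ncount I l M) + 1 + real (Suc n) * (w0 l + \<epsilon>) + sqrt (real (Suc n))"
          using a0 by (intro add_mono mult_right_mono) auto
        finally show ?thesis .
      qed
    qed
  qed
  define x where "x = 2 * (real M + 1) / \<epsilon> + 4 / \<epsilon>^2"
  define t1 where "t1 = max M (nat \<lceil>x\<rceil>) + 1"
  have t1t0: "t1 \<ge> t0" unfolding t1_def M_def by simp
  have small: "(real M + 1 + sqrt (real t)) / real t \<le> \<epsilon>" if t: "t \<ge> t1" for t
  proof -
    have tpos: "real t > 0" using t t1_def by simp
    have x1: "x \<le> real (nat \<lceil>x\<rceil>)" by (rule real_nat_ceiling_ge)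
    have "nat \<lceil>x\<rceil> \<le> max M (nat \<lceil>x\<rceil>)" by (rule max.cobounded2)
    also have "\<dots> \<le> t1" unfolding t1_def by (rule le_add1)
    also have "t1 \<le> t" by (rule t)
    finally have "nat \<lceil>x\<rceil> \<le> t" .
    then have "real (nat \<lceil>x\<rceil>) \<le> real t" by (simp only: of_nat_le_iff)
    then have tx: "x \<le> real t" using x1 by linarith
    have p1: "2 * (real M + 1) / \<epsilon> \<ge> 0" "4 / \<epsilon>^2 \<ge> 0" using assms(5) by auto
    have ta: "real t \<ge> 2 * (real M + 1) / \<epsilon>" and tb: "real t \<ge> 4 / \<epsilon>^2"
      using tx p1 unfolding x_def by linarith+
    have e1: "(real M + 1) / real t \<le> \<epsilon> / 2"
    proof -
      have "2 * (real M + 1) \<le> real t * \<epsilon>" using ta assms(5) by (simp only: pos_divide_le_eq)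
      then have "real M + 1 \<le> \<epsilon> / 2 * real t" by (simp add: algebra_simps)
      then show ?thesis using tpos by (simp only: pos_divide_le_eq)
    qed
    have "sqrt (4 / \<epsilon>^2) \<le> sqrt (real t)" using tb by (rule real_sqrt_le_mono)
    moreover have "sqrt (4 / \<epsilon>^2) = 2 / \<epsilon>" using assms(5)
      by (simp add: real_sqrt_divide)
    ultimately have st: "2 / \<epsilon> \<le> sqrt (real t)" by simp
    then have "2 \<le> sqrt (real t) * \<epsilon>" using assms(5) by (simp only: pos_divide_le_eq)
    then have st2: "1 \<le> \<epsilon> / 2 * sqrt (real t)" by (simp add: algebra_simps)
    have ss: "sqrt (real t) * sqrt (real t) = real t" using tpos by simp
    have "sqrt (real t) \<le> \<epsilon> / 2 * sqrt (real t) * sqrt (real t)"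
      using st2 mult_right_mono[OF st2, of "sqrt (real t)"] by simp
    then have "sqrt (real t) \<le> \<epsilon> / 2 * real t" using ss by (simp add: mult.assoc)
    then have e2: "sqrt (real t) / real t \<le> \<epsilon> / 2" using tpos by (simp only: pos_divide_le_eq)
    have "(real M + 1 + sqrt (real t)) / real t = (real M + 1) / real t + sqrt (real t) / real t"
      by (simp add: add_divide_distrib)
    then show ?thesis using e1 e2 by linarith
  qed
  have upper: "real (Ncount I l t) / real t \<le> w0 l + 2 * \<epsilon>" if l: "l \<in> L" and t: "t \<ge> t1" for l t
  proof -
    have tM: "t \<ge> M" using t unfolding t1_def by simp
    have tpos: "real t > 0" using t t1_def by simp
    have "real (Ncount I l M) \<le> real M" using Ncount_le[of I l M] by simp
    then have "real (Ncount I l t) \<le> (real M + 1 + sqrt (real t)) + real t * (w0 l + \<epsilon>)"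
      using bound[OF l tM] by linarith
    then have "real (Ncount I l t) / real t \<le> ((real M + 1 + sqrt (real t)) + real t * (w0 l + \<epsilon>)) / real t"
      using tpos by (intro divide_right_mono) auto
    also have "\<dots> = (real M + 1 + sqrt (real t)) / real t + (w0 l + \<epsilon>)"
      using tpos by (simp add: add_divide_distrib)
    also have "\<dots> \<le> w0 l + 2 * \<epsilon>" using small[OF t] by simp
    finally show ?thesis .
  qed
  have lower: "real (Ncount I l t) / real t \<ge> w0 l - 2 * (real K - 1) * \<epsilon>"
    if l: "l \<in> L" and t: "t \<ge> t1" for l t
  proof -
    have tpos: "real t > 0" using t t1_def by simp
    have s1: "(\<Sum>j\<in>L. real (Ncount I j t) / real t) = 1"
      using Nsum[of t] tpos by (simp add: sum_divide_distrib[symmetric])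
    have s2: "(\<Sum>j\<in>L. real (Ncount I j t) / real t)
        = real (Ncount I l t) / real t + (\<Sum>j\<in>L - {l}. real (Ncount I j t) / real t)"
      using finL l by (simp add: sum.remove)
    have s3: "(\<Sum>j\<in>L. w0 j) = w0 l + (\<Sum>j\<in>L - {l}. w0 j)"
      using finL l by (simp add: sum.remove)
    have "(\<Sum>j\<in>L - {l}. real (Ncount I j t) / real t) \<le> (\<Sum>j\<in>L - {l}. w0 j + 2 * \<epsilon>)"
      using upper t by (intro sum_mono) auto
    also have "\<dots> = (\<Sum>j\<in>L - {l}. w0 j) + (real K - 1) * (2 * \<epsilon>)"
      using finL l K1 unfolding K_def by (simp add: sum.distrib of_nat_diff)
    finally show ?thesis using s1 s2 s3 w0props by (simp add: algebra_simps)
  qed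
  have main: "\<exists>t1\<ge>t0. \<forall>t\<ge>t1.
           (MAX l\<in>L. \<bar>real (Ncount I l t) / real t - w0 l\<bar>) \<le> 2 * (real K - 1) * \<epsilon>"
  proof (intro exI[of _ t1] conjI allI impI t1t0)
    fix t assume t: "t1 \<le> t"
    show "(MAX l\<in>L. \<bar>real (Ncount I l t) / real t - w0 l\<bar>) \<le> 2 * (real K - 1) * \<epsilon>"
    proof (rule Max.boundedI)
      show "finite ((\<lambda>l. \<bar>real (Ncount I l t) / real t - w0 l\<bar>) ` L)" using finL by simp
      show "(\<lambda>l. \<bar>real (Ncount I l t) / real t - w0 l\<bar>) ` L \<noteq> {}" using Lne by simp
      fix a assume "a \<in> (\<lambda>l. \<bar>real (Ncount I l t) / real t - w0 l\<bar>) ` L"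
      then obtain l where l: "l \<in> L" and a: "a = \<bar>real (Ncount I l t) / real t - w0 l\<bar>" by blast
      have lo: "real (Ncount I l t) / real t - w0 l \<ge> - (2 * (real K - 1) * \<epsilon>)"
        using lower[OF l t] by simp
      have up: "real (Ncount I l t) / real t - w0 l \<le> 2 * (real K - 1) * \<epsilon>"
      proof (cases "K \<ge> 2")
        case True
        then have "2 * \<epsilon> \<le> 2 * (real K - 1) * \<epsilon>" using assms(5) by simp
        then show ?thesis using upper[OF l t] by simp
      next
        case False
        then have "K = 1" using K1 by simp
        then have Ll: "L = {l}" using l unfolding K_def by (metis card_1_singletonE singletonD)
        then have "w0 l = 1" using w0props by simp
        moreover have "real (Ncount I l t) / real t \<le> 1"
          using Ncount_le[of I l t] by (simp add: divide_le_eq)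
        ultimately show ?thesis using \<open>K = 1\<close> by simp
      qed
      show "a \<le> 2 * (real K - 1) * \<epsilon>" using lo up a by (simp add: abs_le_iff)
    qed
  qed
  then show ?thesis unfolding L_def K_def .
qed

end
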